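(* There is an absolute constant $c>0$ such that for every $n\ge2$, every $0<\rho\le1/3$ and every $0<\varepsilon\le\rho^{2n}$, the maximum over all $n$-agent symmetric averaging systems with parameter $\rho$ of the communication count $\mathcal{C}_\varepsilon$ is at least $$\Bigl(\frac{c}{\rho n}\log\frac1\varepsilon\Bigr)^{n-1}.$$
   Context: A (symmetric) averaging system with parameter $\rho\in(0,1/2]$ on $n$ agents consists of an infinite sequence of undirected graphs $(g_t)_{t\ge1}$ on $\{1,\dots,n\}$, each with a self-loop at every vertex, together with positions $x_i(t)\in[0,1]$ obeying: for each $t$ and vertex $i$, with $L_i(t)=\min\{x_j(t): \{i,j\}\in g_t\}$, $R_i(t)=\max\{x_j(t): \{i,j\}\in g_t\}$ and $\delta_i(t)=\rho(R_i(t)-L_i(t))$, the new position satisfies $L_i(t)+\delta_i(t)\le x_i(t+1)\le R_i(t)-\delta_i(t)$. The communication count $\mathcal{C}_\varepsilon$ of such a system is the number of time steps $t$ at which $g_t$ has an edge $\{i,j\}$ with $|x_i(t)-x_j(t)|\ge\varepsilon$. Logarithms are base 2. *)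

theory Defs
  imports Complex_Main "HOL-Library.Extended_Nat"
begin

text \<open>Agents are 0,...,n-1; time steps are t = 1,2,....
  g t i j : the undirected graph g_t has edge {i,j};  x t i : position of agent i at time t.\<close>

definition nbr_vals :: "nat \<Rightarrow> (nat \<Rightarrow> nat \<Rightarrow> nat \<Rightarrow> bool) \<Rightarrow> (nat \<Rightarrow> nat \<Rightarrow> real) \<Rightarrow> nat \<Rightarrow> nat \<Rightarrow> real set" where
  "nbr_vals n g x t i = {x t j | j. j < n \<and> g t i j}"

definition averaging_system :: "nat \<Rightarrow> real \<Rightarrow> (nat \<Rightarrow> nat \<Rightarrow> nat \<Rightarrow> bool) \<Rightarrow> (nat \<Rightarrow> nat \<Rightarrow> real) \<Rightarrow> bool" where
  "averaging_system n \<rho> g x \<longleftrightarrow>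
     (\<forall>t\<ge>1. \<forall>i<n. g t i i) \<and>
     (\<forall>t\<ge>1. \<forall>i<n. \<forall>j<n. g t i j \<longleftrightarrow> g t j i) \<and>
     (\<forall>t\<ge>1. \<forall>i<n. 0 \<le> x t i \<and> x t i \<le> 1) \<and>
     (\<forall>t\<ge>1. \<forall>i<n.
        let L = Min (nbr_vals n g x t i); R = Max (nbr_vals n g x t i); d = \<rho> * (R - L)
        in L + d \<le> x (Suc t) i \<and> x (Suc t) i \<le> R - d)"

definition comm_times :: "nat \<Rightarrow> real \<Rightarrow> (nat \<Rightarrow> nat \<Rightarrow> nat \<Rightarrow> bool) \<Rightarrow> (nat \<Rightarrow> nat \<Rightarrow> real) \<Rightarrow> nat set" where
  "comm_times n \<epsilon> g x = {t. t \<ge> 1 \<and> (\<exists>i<n. \<exists>j<n. g t i j \<and> \<bar>x t i - x t j\<bar> \<ge> \<epsilon>)}"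

definition comm_count :: "nat \<Rightarrow> real \<Rightarrow> (nat \<Rightarrow> nat \<Rightarrow> nat \<Rightarrow> bool) \<Rightarrow> (nat \<Rightarrow> nat \<Rightarrow> real) \<Rightarrow> enat" where
  "comm_count n \<epsilon> g x = (if finite (comm_times n \<epsilon> g x) then enat (card (comm_times n \<epsilon> g x)) else \<infinity>)"

end

theory Submission
  imports Defs
begin


definition in01 :: "nat \<Rightarrow> (nat \<Rightarrow> real) \<Rightarrow> bool" where
  "in01 n p = (\<forall>i<n. 0 \<le> p i \<and> p i \<le> 1)"

definition vstep :: "nat \<Rightarrow> real \<Rightarrow> (nat \<Rightarrow> real) \<Rightarrow> nat set \<Rightarrow> (nat \<Rightarrow> real) \<Rightarrow> bool" where
  "vstep n \<rho> p S q = (S \<subseteq> {..<n} \<and> S \<noteq> {} \<and> (\<forall>i. i \<notin> S \<longrightarrow> q i = p i) \<and>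
     (\<forall>i\<in>S. Min (p`S) + \<rho>*(Max (p`S) - Min (p`S)) \<le> q i \<and> q i \<le> Max (p`S) - \<rho>*(Max (p`S) - Min (p`S))))"

definition cnt :: "real \<Rightarrow> (nat \<Rightarrow> real) \<Rightarrow> nat set \<Rightarrow> nat" where
  "cnt \<epsilon> p S = (if \<exists>i\<in>S. \<exists>j\<in>S. \<epsilon> \<le> \<bar>p i - p j\<bar> then 1 else 0)"

inductive reach :: "nat \<Rightarrow> real \<Rightarrow> real \<Rightarrow> (nat \<Rightarrow> real) \<Rightarrow> (nat \<Rightarrow> real) \<Rightarrow> nat \<Rightarrow> bool"
  for n \<rho> \<epsilon> where
  refl: "reach n \<rho> \<epsilon> p p 0"
| step: "vstep n \<rho> p S q \<Longrightarrow> reach n \<rho> \<epsilon> q r k \<Longrightarrow> reach n \<rho> \<epsilon> p r (cnt \<epsilon> p S + k)"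

lemma reach_trans:
  assumes "reach n \<rho> \<epsilon> p q k1" "reach n \<rho> \<epsilon> q r k2"
  shows "reach n \<rho> \<epsilon> p r (k1 + k2)"
  using assms
proof (induction rule: reach.induct)
  case (refl p) then show ?case by simp
next
  case (step p S q r k)
  then show ?case by (metis reach.step add.assoc)
qed

lemma vstep_in01:
  assumes "vstep n \<rho> p S q" "in01 n p" "0 \<le> \<rho>"
  shows "in01 n q"
proof -
  have fin: "finite S" "S \<noteq> {}" "S \<subseteq> {..<n}" using assms(1) unfolding vstep_def
    using finite_subset by auto
  have mn: "0 \<le> Min (p`S)" using fin assms(2) unfolding in01_def by auto
  have mx: "Max (p`S) \<le> 1" using fin assms(2) unfolding in01_def by auto
  have le: "Min (p`S) \<le> Max (p`S)" using fin by (simp add: Min_le_iff)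
  show ?thesis unfolding in01_def
  proof (intro allI impI)
    fix i assume i: "i < n"
    show "0 \<le> q i \<and> q i \<le> 1"
    proof (cases "i \<in> S")
      case True
      then have "Min (p`S) + \<rho>*(Max (p`S) - Min (p`S)) \<le> q i \<and> q i \<le> Max (p`S) - \<rho>*(Max (p`S) - Min (p`S))"
        using assms(1) unfolding vstep_def by blast
      moreover have "0 \<le> \<rho>*(Max (p`S) - Min (p`S))" using assms(3) le by simp
      ultimately show ?thesis using mn mx by linarith
    next
      case False
      then show ?thesis using assms(1,2) i unfolding vstep_def in01_def by auto
    qed
  qed
qed

lemma reach_system:
  assumes "reach n \<rho> \<epsilon> p r k" "in01 n p" "0 \<le> \<rho>" "0 < \<epsilon>"
  shows "\<exists>g x. averaging_system n \<rho> g x \<and> x 1 = p \<and> comm_count n \<epsilon> g x = enat k"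
  using assms
proof (induction rule: reach.induct)
  case (refl p)
  define g :: "nat \<Rightarrow> nat \<Rightarrow> nat \<Rightarrow> bool" where "g = (\<lambda>t i j. i = j)"
  define x :: "nat \<Rightarrow> nat \<Rightarrow> real" where "x = (\<lambda>t. p)"
  have nv: "nbr_vals n g x t i = {p i}" if "i < n" for t i
    using that unfolding nbr_vals_def g_def x_def by auto
  have "averaging_system n \<rho> g x"
    unfolding averaging_system_def using refl.prems nv
    by (auto simp: g_def x_def in01_def Let_def)
  moreover have "comm_times n \<epsilon> g x = {}"
    unfolding comm_times_def g_def x_def using refl.prems by auto
  ultimately have "comm_count n \<epsilon> g x = enat 0" unfolding comm_count_def by (simp add: zero_enat_def)
  then show ?case using \<open>averaging_system n \<rho> g x\<close> unfolding x_def by blast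
next
  case (step p S q r k)
  have q01: "in01 n q" using vstep_in01 step by blast
  obtain g x where sys: "averaging_system n \<rho> g x" and x1: "x 1 = q"
    and cc: "comm_count n \<epsilon> g x = enat k"
    using step.IH q01 step.prems by blast
  have fin: "finite (comm_times n \<epsilon> g x)" and card: "card (comm_times n \<epsilon> g x) = k"
    using cc unfolding comm_count_def by (auto split: if_splits)
  have vs: "S \<subseteq> {..<n}" "S \<noteq> {}" "\<And>i. i \<notin> S \<Longrightarrow> q i = p i"
    "\<And>i. i\<in>S \<Longrightarrow> Min (p`S) + \<rho>*(Max (p`S) - Min (p`S)) \<le> q i \<and> q i \<le> Max (p`S) - \<rho>*(Max (p`S) - Min (p`S))"
    using step.hyps(1) unfolding vstep_def by auto
  define g' :: "nat \<Rightarrow> nat \<Rightarrow> nat \<Rightarrow> bool" where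
    "g' = (\<lambda>t i j. if t = 1 then (i = j \<or> (i \<in> S \<and> j \<in> S)) else g (t - 1) i j)"
  define x' :: "nat \<Rightarrow> nat \<Rightarrow> real" where "x' = (\<lambda>t. if t \<le> 1 then p else x (t - 1))"
  have nv1: "nbr_vals n g' x' 1 i = (if i \<in> S then p ` S else {p i})" if "i < n" for i
    using that vs(1) unfolding nbr_vals_def g'_def x'_def by auto
  have nv2: "nbr_vals n g' x' t i = nbr_vals n g x (t - 1) i" if "t \<ge> 2" for t i
    using that unfolding nbr_vals_def g'_def x'_def by auto
  have A1: "g' t i i" if "1 \<le> t" "i < n" for t i
    using sys that unfolding g'_def averaging_system_def by auto
  have A2: "g' t i j = g' t j i" if "1 \<le> t" "i < n" "j < n" for t i j
    using sys that unfolding g'_def averaging_system_def by auto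
  have A3: "0 \<le> x' t i \<and> x' t i \<le> 1" if "1 \<le> t" "i < n" for t i
    using sys that step.prems(1) unfolding x'_def averaging_system_def in01_def by auto
  have A4: "let L = Min (nbr_vals n g' x' t i); R = Max (nbr_vals n g' x' t i); d = \<rho> * (R - L)
        in L + d \<le> x' (Suc t) i \<and> x' (Suc t) i \<le> R - d" if t: "1 \<le> t" and i: "i < n" for t i
  proof (cases "t = 1")
    case True
    have xs: "x' (Suc t) i = q i" using True x1 unfolding x'_def by simp
    show ?thesis
    proof (cases "i \<in> S")
      case True
      then show ?thesis using nv1[OF i] xs vs(4)[OF True] \<open>t = 1\<close> by (simp add: Let_def)
    next
      case False
      then show ?thesis using nv1[OF i] xs vs(3)[OF False] \<open>t = 1\<close> by (simp add: Let_def)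
    qed
  next
    case False
    then have t2: "t \<ge> 2" using t by simp
    have "x' (Suc t) i = x (Suc (t - 1)) i" using t2 unfolding x'_def by simp
    moreover have "1 \<le> t - 1" using t2 by simp
    ultimately show ?thesis using sys i nv2[OF t2] unfolding averaging_system_def by auto
  qed
  have A: "averaging_system n \<rho> g' x'"
    unfolding averaging_system_def using A1 A2 A3 A4 by blast
  define A0 where "A0 = (if \<exists>i\<in>S. \<exists>j\<in>S. \<epsilon> \<le> \<bar>p i - p j\<bar> then {1::nat} else {})"
  have ct: "comm_times n \<epsilon> g' x' = A0 \<union> Suc ` comm_times n \<epsilon> g x"
  proof (rule set_eqI)
    fix t
    show "t \<in> comm_times n \<epsilon> g' x' \<longleftrightarrow> t \<in> A0 \<union> Suc ` comm_times n \<epsilon> g x"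
    proof (cases "t = 1")
      case True
      have "t \<in> comm_times n \<epsilon> g' x' \<longleftrightarrow> (\<exists>i\<in>S. \<exists>j\<in>S. \<epsilon> \<le> \<bar>p i - p j\<bar>)"
        unfolding comm_times_def g'_def x'_def using True vs(1) step.prems(3) by auto
      moreover have "t \<notin> Suc ` comm_times n \<epsilon> g x" using True unfolding comm_times_def by auto
      ultimately show ?thesis using True unfolding A0_def by auto
    next
      case False
      have "t \<notin> A0" using False unfolding A0_def by auto
      moreover have "t \<in> comm_times n \<epsilon> g' x' \<longleftrightarrow> t \<in> Suc ` comm_times n \<epsilon> g x"
      proof (cases "t = 0")
        case True then show ?thesis unfolding comm_times_def by auto
      next
        case f0: False
        then have "t = Suc (t - 1)" by simp
        then have "t \<in> Suc ` comm_times n \<epsilon> g x \<longleftrightarrow> t - 1 \<in> comm_times n \<epsilon> g x"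
          by (metis image_iff nat.inject)
        moreover have "t \<in> comm_times n \<epsilon> g' x' \<longleftrightarrow> t - 1 \<in> comm_times n \<epsilon> g x"
          unfolding comm_times_def g'_def x'_def using False f0 by auto
        ultimately show ?thesis by simp
      qed
      ultimately show ?thesis by simp
    qed
  qed
  have disj: "A0 \<inter> Suc ` comm_times n \<epsilon> g x = {}"
    unfolding A0_def comm_times_def by auto
  have "card (comm_times n \<epsilon> g' x') = card A0 + card (Suc ` comm_times n \<epsilon> g x)"
    unfolding ct using disj fin by (simp add: card_Un_disjoint A0_def)
  also have "\<dots> = cnt \<epsilon> p S + k" using card unfolding A0_def cnt_def by (simp add: card_image)
  finally have "card (comm_times n \<epsilon> g' x') = cnt \<epsilon> p S + k" .
  moreover have "finite (comm_times n \<epsilon> g' x')" unfolding ct using fin A0_def by auto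
  ultimately have "comm_count n \<epsilon> g' x' = enat (cnt \<epsilon> p S + k)" unfolding comm_count_def by simp
  moreover have "x' 1 = p" unfolding x'_def by simp
  ultimately show ?case using A by blast
qed



definition QP :: "nat \<Rightarrow> real \<Rightarrow> real \<Rightarrow> nat \<Rightarrow> nat \<Rightarrow> bool" where
  "QP n \<rho> \<epsilon> M m = (\<forall>a s p. 0 \<le> s \<longrightarrow> \<epsilon> \<le> s * (1-2*\<rho>)^M * \<rho>^(m-2) * (1-2*\<rho>)^(M*(m-2)) \<longrightarrow>
     (\<forall>i<m-1. p i = a) \<longrightarrow> p (m-1) = a+s \<longrightarrow>
     (\<exists>q k c. reach n \<rho> \<epsilon> p q k \<and> (M+1)^(m-1) \<le> k \<and> a \<le> c \<and> c \<le> a+s \<and> (\<forall>i<m. q i = c) \<and> (\<forall>i. m \<le> i \<longrightarrow> q i = p i)))"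

definition SP :: "nat \<Rightarrow> real \<Rightarrow> real \<Rightarrow> nat \<Rightarrow> nat \<Rightarrow> bool" where
  "SP n \<rho> \<epsilon> M m = (\<forall>a s p. 0 \<le> s \<longrightarrow> \<epsilon> \<le> s * \<rho>^(m-2) * (1-2*\<rho>)^(M*(m-2)) \<longrightarrow>
     (\<forall>i<m-1. p i = a) \<longrightarrow> p (m-1) = a+s \<longrightarrow>
     (\<exists>q k c. reach n \<rho> \<epsilon> p q k \<and> (M+1)^(m-2) \<le> k \<and> a \<le> c \<and> c \<le> a+\<rho>*s \<and> (\<forall>i<m-1. q i = c)
        \<and> q (m-1) = a+s-\<rho>*s \<and> (\<forall>i. m \<le> i \<longrightarrow> q i = p i)))"

lemma aux_mid: "(x::real) \<le> d / 3 \<Longrightarrow> 0 \<le> d \<Longrightarrow> c + x \<le> c + d/2 \<and> c + d/2 \<le> (c+d) - x"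
  by (intro conjI; linarith)

lemma stage_op:
  assumes m: "2 \<le> m" "m \<le> n" and s: "0 \<le> s" and rho: "0 < \<rho>" "\<rho> \<le> 1/3"
    and pa: "\<forall>i<m-1. p i = a" and pt: "p (m-1) = a+s"
  shows "vstep n \<rho> p {m-2, m-1} (p(m-2 := a+\<rho>*s, m-1 := a+s-\<rho>*s))"
    and "\<epsilon> \<le> s \<Longrightarrow> cnt \<epsilon> p {m-2, m-1} = 1"
proof -
  have p2: "p (m-2) = a" using pa m by auto
  have ne: "m - 2 \<noteq> m - 1" using m by auto
  have img: "p ` {m-2, m-1} = {a, a+s}" using p2 pt by auto
  have mn: "Min (p ` {m-2, m-1}) = a" and mx: "Max (p ` {m-2, m-1}) = a+s"
    unfolding img using s by auto
  have "\<rho>*s \<le> (1/3)*s" using rho s by (intro mult_right_mono) auto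
  then have "\<rho>*s \<le> s/3" by simp
  then show "vstep n \<rho> p {m-2, m-1} (p(m-2 := a+\<rho>*s, m-1 := a+s-\<rho>*s))"
    unfolding vstep_def mn mx using m ne s by auto
  show "\<epsilon> \<le> s \<Longrightarrow> cnt \<epsilon> p {m-2, m-1} = 1"
    unfolding cnt_def using p2 pt by (intro if_P) (rule bexI[of _ "m-1"], rule bexI[of _ "m-2"], auto)
qed

lemma SP2:
  assumes m: "2 \<le> n" and rho: "0 < \<rho>" "\<rho> \<le> 1/3"
  shows "SP n \<rho> \<epsilon> M 2"
  unfolding SP_def
proof (intro allI impI)
  fix a s and p :: "nat \<Rightarrow> real"
  assume s: "0 \<le> s" and e: "\<epsilon> \<le> s * \<rho>^(2-2) * (1-2*\<rho>)^(M*(2-2))"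
    and pa: "\<forall>i<2-1. p i = a" and pt: "p (2-1) = a+s"
  define q where "q = p(2-2 := a+\<rho>*s, 2-1 := a+s-\<rho>*s)"
  have v: "vstep n \<rho> p {2-2, 2-1} q" using stage_op(1)[of 2 n s \<rho> p a] m s rho pa pt q_def by auto
  have c: "cnt \<epsilon> p {2-2, 2-1} = 1" using stage_op(2)[of 2 n s \<rho> p a \<epsilon>] m s rho pa pt e by auto
  have r: "reach n \<rho> \<epsilon> p q (cnt \<epsilon> p {2-2, 2-1} + 0)" using reach.step[OF v reach.refl] .
  show "\<exists>q k c. reach n \<rho> \<epsilon> p q k \<and> (M+1)^(2-2) \<le> k \<and> a \<le> c \<and> c \<le> a+\<rho>*s \<and> (\<forall>i<2-1. q i = c)
        \<and> q (2-1) = a+s-\<rho>*s \<and> (\<forall>i. 2 \<le> i \<longrightarrow> q i = p i)"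
    apply (rule exI[of _ q], rule exI[of _ 1], rule exI[of _ "a+\<rho>*s"])
    using r c rho s unfolding q_def by auto
qed

lemma SP_step:
  assumes Q: "QP n \<rho> \<epsilon> M m" and m: "2 \<le> m" "m+1 \<le> n" and rho: "0 < \<rho>" "\<rho> \<le> 1/3"
  shows "SP n \<rho> \<epsilon> M (m+1)"
  unfolding SP_def
proof (intro allI impI)
  fix a s and p :: "nat \<Rightarrow> real"
  assume s: "0 \<le> s" and e: "\<epsilon> \<le> s * \<rho>^(m+1-2) * (1-2*\<rho>)^(M*(m+1-2))"
    and pa: "\<forall>i<m+1-1. p i = a" and pt: "p (m+1-1) = a+s"
  define p1 where "p1 = p(m+1-2 := a+\<rho>*s, m+1-1 := a+s-\<rho>*s)"
  have v: "vstep n \<rho> p {m+1-2, m+1-1} p1" using stage_op(1)[of "m+1" n s \<rho> p a] m s rho pa pt p1_def by auto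
  have p1a: "\<forall>i<m-1. p1 i = a" using pa unfolding p1_def by auto
  have p1t: "p1 (m-1) = a + \<rho>*s" unfolding p1_def using m by auto
  have p1m: "p1 m = a+s-\<rho>*s" unfolding p1_def using m by auto
  have p1o: "\<forall>i. m+1 \<le> i \<longrightarrow> p1 i = p i" unfolding p1_def by auto
  have eq: "s * \<rho>^(m+1-2) * (1-2*\<rho>)^(M*(m+1-2)) = (\<rho>*s) * (1-2*\<rho>)^M * \<rho>^(m-2) * (1-2*\<rho>)^(M*(m-2))"
  proof -
    have a1: "m+1-2 = Suc (m-2)" using m by auto
    have a2: "M*(m+1-2) = M + M*(m-2)" unfolding a1 by simp
    show ?thesis unfolding a2 a1 by (simp add: power_add)
  qed
  have rs0: "0 \<le> \<rho>*s" using rho s by simp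
  have e2: "\<epsilon> \<le> (\<rho>*s) * (1-2*\<rho>)^M * \<rho>^(m-2) * (1-2*\<rho>)^(M*(m-2))" by (subst eq[symmetric]) (rule e)
  note H = Q[unfolded QP_def, THEN spec[of _ a], THEN spec[of _ "\<rho>*s"], THEN spec[of _ p1]]
  have ex: "\<exists>q k c. reach n \<rho> \<epsilon> p1 q k \<and> (M+1)^(m-1) \<le> k \<and> a \<le> c \<and> c \<le> a+\<rho>*s \<and> (\<forall>i<m. q i = c) \<and> (\<forall>i. m \<le> i \<longrightarrow> q i = p1 i)"
    using mp[OF mp[OF mp[OF mp[OF H rs0] e2] p1a] p1t] .
  then obtain q k c where r: "reach n \<rho> \<epsilon> p1 q k" and k: "(M+1)^(m-1) \<le> k" and c: "a \<le> c" "c \<le> a + \<rho>*s"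
    and qc: "\<forall>i<m. q i = c" and qo: "\<forall>i. m \<le> i \<longrightarrow> q i = p1 i"
    by blast
  have r2: "reach n \<rho> \<epsilon> p q (cnt \<epsilon> p {m+1-2, m+1-1} + k)" using reach.step[OF v r] .
  have i1: "m+1-2 = m-1" "m+1-1 = m" using m by auto
  have k2: "(M+1)^(m+1-2) \<le> cnt \<epsilon> p {m+1-2, m+1-1} + k" using k unfolding i1 by simp
  have qm: "q (m+1-1) = a+s-\<rho>*s" unfolding i1 using qo p1m by simp
  have qc2: "\<forall>i<m+1-1. q i = c" unfolding i1 using qc .
  have qo2: "\<forall>i. m+1 \<le> i \<longrightarrow> q i = p i" using qo p1o by simp
  show "\<exists>q k c. reach n \<rho> \<epsilon> p q k \<and> (M+1)^(m+1-2) \<le> k \<and> a \<le> c \<and> c \<le> a+\<rho>*s \<and> (\<forall>i<m+1-1. q i = c)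
        \<and> q (m+1-1) = a+s-\<rho>*s \<and> (\<forall>i. m+1 \<le> i \<longrightarrow> q i = p i)"
    using r2 k2 c qc2 qm qo2 by blast
qed

lemma R_lemma:
  assumes S: "SP n \<rho> \<epsilon> M m" and m: "2 \<le> m" "m \<le> n" and rho: "0 < \<rho>" "\<rho> \<le> 1/3"
  shows "\<forall>a s p. 0 \<le> s \<longrightarrow> \<epsilon> \<le> s * (1-2*\<rho>)^j * \<rho>^(m-2) * (1-2*\<rho>)^(M*(m-2)) \<longrightarrow>
     (\<forall>i<m-1. p i = a) \<longrightarrow> p (m-1) = a+s \<longrightarrow>
     (\<exists>q k c. reach n \<rho> \<epsilon> p q k \<and> (j+1)*(M+1)^(m-2) \<le> k \<and> a \<le> c \<and> c \<le> a+s \<and> (\<forall>i<m. q i = c) \<and> (\<forall>i. m \<le> i \<longrightarrow> q i = p i))"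
proof (induction j)
  case 0
  show ?case
  proof (intro allI impI)
    fix a s and p :: "nat \<Rightarrow> real"
    assume s: "0 \<le> s" and e: "\<epsilon> \<le> s * (1-2*\<rho>)^0 * \<rho>^(m-2) * (1-2*\<rho>)^(M*(m-2))"
      and pa: "\<forall>i<m-1. p i = a" and pt: "p (m-1) = a+s"
    obtain q1 k1 c1 where r1: "reach n \<rho> \<epsilon> p q1 k1" and k1: "(M+1)^(m-2) \<le> k1" and c1: "a \<le> c1" "c1 \<le> a+\<rho>*s"
      and q1c: "\<forall>i<m-1. q1 i = c1" and q1t: "q1 (m-1) = a+s-\<rho>*s" and q1o: "\<forall>i. m \<le> i \<longrightarrow> q1 i = p i"
    proof -
      note H = S[unfolded SP_def, THEN spec[of _ a], THEN spec[of _ s], THEN spec[of _ p]]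
      have e0: "\<epsilon> \<le> s * \<rho>^(m-2) * (1-2*\<rho>)^(M*(m-2))" using e by simp
      from mp[OF mp[OF mp[OF mp[OF H s] e0] pa] pt] show ?thesis by (elim exE conjE) (rule that; assumption)
    qed
    define T where "T = a+s-\<rho>*s"
    define v where "v = c1 + (T - c1)/2"
    define q2 where "q2 = (\<lambda>i. if i < m then v else q1 i)"
    have "\<rho>*s \<le> (1/3)*s" using rho s by (intro mult_right_mono) auto
    then have rs: "\<rho>*s \<le> s/3" by simp
    have img: "q1 ` {..<m} = {c1, T}"
    proof
      have "q1 i \<in> {c1, T}" if "i < m" for i
      proof (cases "i < m-1")
        case True then show ?thesis using q1c by simp
      next
        case False then have "i = m-1" using that by linarith
        then show ?thesis using q1t T_def by simp
      qed
      then show "q1 ` {..<m} \<subseteq> {c1, T}" by auto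
      have "c1 \<in> q1 ` {..<m}" using q1c m by (intro image_eqI[of c1 q1 0]) auto
      moreover have "T \<in> q1 ` {..<m}" using q1t T_def m by (intro image_eqI[of T q1 "m-1"]) auto
      ultimately show "{c1, T} \<subseteq> q1 ` {..<m}" by blast
    qed
    have cT: "c1 \<le> T" using c1 rs T_def by linarith
    have mn: "Min (q1 ` {..<m}) = c1" and mx: "Max (q1 ` {..<m}) = T" unfolding img using cT by auto
    have "\<rho>*(T-c1) \<le> (1/3)*(T-c1)" using rho cT by (intro mult_right_mono) auto
    then have rd: "\<rho>*(T-c1) \<le> (T-c1)/3" by simp
    have ineq: "c1 + \<rho>*(T-c1) \<le> v \<and> v \<le> T - \<rho>*(T-c1)" using aux_mid[of "\<rho> * (T - c1)" "T - c1" c1] rd cT unfolding v_def by simp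
    have "0 \<le> \<rho>*(T-c1)" using rho cT by simp
    moreover have "0 \<le> \<rho>*s" using rho s by simp
    ultimately have vin: "a \<le> v" "v \<le> a+s" using ineq c1 T_def by linarith+
    have v: "vstep n \<rho> q1 {..<m} q2"
      unfolding vstep_def mn mx using m ineq by (auto simp: q2_def lessThan_empty_iff)
    have r2: "reach n \<rho> \<epsilon> p q2 (k1 + (cnt \<epsilon> q1 {..<m} + 0))"
      using reach_trans[OF r1 reach.step[OF v reach.refl]] .
    show "\<exists>q k c. reach n \<rho> \<epsilon> p q k \<and> (0+1)*(M+1)^(m-2) \<le> k \<and> a \<le> c \<and> c \<le> a+s \<and> (\<forall>i<m. q i = c) \<and> (\<forall>i. m \<le> i \<longrightarrow> q i = p i)"
      apply (rule exI[of _ q2], rule exI[of _ "k1 + (cnt \<epsilon> q1 {..<m} + 0)"], rule exI[of _ v])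
      using r2 k1 vin q1o unfolding q2_def by auto
  qed
next
  case (Suc j)
  show ?case
  proof (intro allI impI)
    fix a s and p :: "nat \<Rightarrow> real"
    assume s: "0 \<le> s" and e: "\<epsilon> \<le> s * (1-2*\<rho>)^Suc j * \<rho>^(m-2) * (1-2*\<rho>)^(M*(m-2))"
      and pa: "\<forall>i<m-1. p i = a" and pt: "p (m-1) = a+s"
    define X where "X = \<rho>^(m-2) * (1-2*\<rho>)^(M*(m-2))"
    have X0: "0 \<le> X" unfolding X_def using rho by simp
    have r0: "0 \<le> 1-2*\<rho>" "1-2*\<rho> \<le> 1" using rho by auto
    have rj: "(1-2*\<rho>)^Suc j \<le> 1" using power_le_one[OF r0] .
    have "s * (1-2*\<rho>)^Suc j * \<rho>^(m-2) * (1-2*\<rho>)^(M*(m-2)) = (s*X) * (1-2*\<rho>)^Suc j"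
      unfolding X_def by (simp add: algebra_simps)
    also have "\<dots> \<le> s*X" using rj X0 s by (simp add: mult_left_le)
    finally have e': "\<epsilon> \<le> s * X" using e by linarith
    obtain q1 k1 c1 where r1: "reach n \<rho> \<epsilon> p q1 k1" and k1: "(M+1)^(m-2) \<le> k1" and c1: "a \<le> c1" "c1 \<le> a+\<rho>*s"
      and q1c: "\<forall>i<m-1. q1 i = c1" and q1t: "q1 (m-1) = a+s-\<rho>*s" and q1o: "\<forall>i. m \<le> i \<longrightarrow> q1 i = p i"
    proof -
      note H = S[unfolded SP_def, THEN spec[of _ a], THEN spec[of _ s], THEN spec[of _ p]]
      have e0: "\<epsilon> \<le> s * \<rho>^(m-2) * (1-2*\<rho>)^(M*(m-2))" using e' unfolding X_def by (simp add: mult.assoc)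
      from mp[OF mp[OF mp[OF mp[OF H s] e0] pa] pt] show ?thesis by (elim exE conjE) (rule that; assumption)
    qed
    define s' where "s' = a+s-\<rho>*s - c1"
    have s'ge: "(1-2*\<rho>)*s \<le> s'" unfolding s'_def using c1 by (simp add: algebra_simps)
    have "0 \<le> (1-2*\<rho>)*s" using r0 s by simp
    then have s'0: "0 \<le> s'" using s'ge by linarith
    have "\<epsilon> \<le> ((1-2*\<rho>)*s) * (1-2*\<rho>)^j * X" using e unfolding X_def by (simp add: algebra_simps)
    also have "\<dots> \<le> s' * (1-2*\<rho>)^j * X"
      using s'ge X0 r0 by (simp add: mult_right_mono)
    finally have e2: "\<epsilon> \<le> s' * (1-2*\<rho>)^j * \<rho>^(m-2) * (1-2*\<rho>)^(M*(m-2))" unfolding X_def by (simp add: mult.assoc)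
    have q1t': "q1 (m-1) = c1 + s'" unfolding s'_def q1t by simp
    obtain q2 k2 c2 where r2: "reach n \<rho> \<epsilon> q1 q2 k2" and k2: "(j+1)*(M+1)^(m-2) \<le> k2"
      and c2: "c1 \<le> c2" "c2 \<le> c1 + s'" and q2c: "\<forall>i<m. q2 i = c2" and q2o: "\<forall>i. m \<le> i \<longrightarrow> q2 i = q1 i"
    proof -
      note H = Suc.IH[THEN spec[of _ c1], THEN spec[of _ s'], THEN spec[of _ q1]]
      from mp[OF mp[OF mp[OF mp[OF H s'0] e2] q1c] q1t'] show ?thesis by (elim exE conjE) (rule that; assumption)
    qed
    show "\<exists>q k c. reach n \<rho> \<epsilon> p q k \<and> (Suc j+1)*(M+1)^(m-2) \<le> k \<and> a \<le> c \<and> c \<le> a+s \<and> (\<forall>i<m. q i = c) \<and> (\<forall>i. m \<le> i \<longrightarrow> q i = p i)"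
    proof -
      have "0 \<le> \<rho>*s" using rho s by simp
      then have cc: "a \<le> c2" "c2 \<le> a+s" using c1 c2 unfolding s'_def by linarith+
      have kk: "(Suc j+1)*(M+1)^(m-2) \<le> k1+k2" using k1 k2 by simp
      have qo: "\<forall>i. m \<le> i \<longrightarrow> q2 i = p i" using q2o q1o by simp
      show ?thesis using reach_trans[OF r1 r2] kk cc q2c qo by blast
    qed
  qed
qed

lemma QP_all:
  assumes m: "2 \<le> m" "m \<le> n" and rho: "0 < \<rho>" "\<rho> \<le> 1/3"
  shows "QP n \<rho> \<epsilon> M m"
  using m
proof (induction m rule: nat_induct_at_least)
  case base
  have S: "SP n \<rho> \<epsilon> M 2" using SP2 base rho by auto
  show ?case using R_lemma[OF S _ base rho, of M] unfolding QP_def by simp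
next
  case (Suc m)
  have S: "SP n \<rho> \<epsilon> M (m+1)" using SP_step[OF Suc.IH] Suc rho by auto
  have R: "\<forall>a s p. 0 \<le> s \<longrightarrow> \<epsilon> \<le> s * (1-2*\<rho>)^M * \<rho>^(m+1-2) * (1-2*\<rho>)^(M*(m+1-2)) \<longrightarrow>
     (\<forall>i<m+1-1. p i = a) \<longrightarrow> p (m+1-1) = a+s \<longrightarrow>
     (\<exists>q k c. reach n \<rho> \<epsilon> p q k \<and> (M+1)*(M+1)^(m+1-2) \<le> k \<and> a \<le> c \<and> c \<le> a+s \<and> (\<forall>i<m+1. q i = c) \<and> (\<forall>i. m+1 \<le> i \<longrightarrow> q i = p i))"
    using R_lemma[OF S _ _ rho, of M] Suc by auto
  have pw: "(M+1)*(M+1)^(m+1-2) = (M+1)^(Suc m - 1)" using Suc.hyps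
  proof -
    have "Suc m - 1 = Suc (m+1-2)" using Suc.hyps by simp
    then show ?thesis by (simp only: power_Suc)
  qed
  show ?case using R unfolding QP_def pw by simp
qed



lemma key_ineq:
  fixes n :: nat and \<rho> \<epsilon> :: real
  assumes n: "2 \<le> n" and rho: "0 < \<rho>" "\<rho> \<le> 1/3" and e: "0 < \<epsilon>" "\<epsilon> \<le> \<rho>^(2*n)"
  defines "L \<equiv> ln (1/\<epsilon>)"
  defines "M \<equiv> nat \<lfloor>L / (12 * real n * \<rho>)\<rfloor>"
  shows "\<epsilon> \<le> (1-2*\<rho>)^M * \<rho>^(n-2) * (1-2*\<rho>)^(M*(n-2))"
    and "1/24 / (\<rho> * real n) * log 2 (1/\<epsilon>) \<le> real M + 1"
    and "0 \<le> 1/24 / (\<rho> * real n) * log 2 (1/\<epsilon>)"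
proof -
  define r where "r = 1-2*\<rho>"
  have r0: "1/3 \<le> r" "r \<le> 1" "0 < r" using rho unfolding r_def by auto
  have Le: "L = - ln \<epsilon>" unfolding L_def using e by (simp add: ln_div)
  have lnrho: "ln \<rho> \<le> 0" using rho by simp
  have "ln \<epsilon> \<le> ln (\<rho>^(2*n))" using e rho by simp
  also have "\<dots> = real (2*n) * ln \<rho>" by (simp add: ln_realpow)
  finally have c1: "real (2*n) * (- ln \<rho>) \<le> L" unfolding Le by simp
  have L0: "0 \<le> L" using c1 lnrho by (smt (verit) mult_nonneg_nonneg of_nat_0_le_iff)
  define y where "y = L / (12 * real n * \<rho>)"
  have y0: "0 \<le> y" unfolding y_def using L0 rho by simp
  have My: "real M \<le> y" unfolding M_def y_def[symmetric] using y0 by linarith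
  have My2: "y \<le> real M + 1" unfolding M_def y_def[symmetric] using y0 by linarith
  have npos: "0 < real n" using n by simp
  have lr: "- ln r \<le> 6*\<rho>"
  proof -
    have "ln (1/r) \<le> 1/r - 1" using r0 by (intro ln_le_minus_one) simp
    also have "1/r - 1 = 2*\<rho>/r" using r0 unfolding r_def by (simp add: field_simps)
    also have "\<dots> \<le> 2*\<rho>*3" using r0 rho by (simp add: field_simps)
    finally show ?thesis using r0 by (simp add: ln_div)
  qed
  have lr0: "0 \<le> - ln r" using r0 by simp
  have h1: "real M * real (n-1) * (- ln r) \<le> real M * real n * (6*\<rho>)"
    by (intro mult_mono) (use lr lr0 in auto)
  have h2: "real M * real n * (6*\<rho>) \<le> L/2"
  proof -
    have "real M * real n * (6*\<rho>) \<le> y * real n * (6*\<rho>)" using My rho npos by (simp add: mult_right_mono)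
    also have "\<dots> = L/2" unfolding y_def using rho npos by (simp add: field_simps)
    finally show ?thesis .
  qed
  have h3: "real (n-2) * (- ln \<rho>) \<le> L/2"
  proof -
    have "real (n-2) * (- ln \<rho>) \<le> real n * (- ln \<rho>)" using lnrho by (intro mult_right_mono) auto
    then show ?thesis using c1 by simp
  qed
  have rhs_pos: "0 < r^M * \<rho>^(n-2) * r^(M*(n-2))" using r0 rho by simp
  have "ln (r^M * \<rho>^(n-2) * r^(M*(n-2))) = real M * ln r + real (n-2) * ln \<rho> + real (M*(n-2)) * ln r"
    using r0 rho by (simp add: ln_mult ln_realpow)
  also have "\<dots> = - (real M * real (n-1) * (- ln r)) - real (n-2) * (- ln \<rho>)"
  proof -
    have a: "real (n-1) = real n - 1" "real (n-2) = real n - 2" using n by (simp_all add: of_nat_diff)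
    have b: "real (M*(n-2)) = real M * (real n - 2)" using a by simp
    show ?thesis unfolding b a by (simp add: algebra_simps)
  qed
  finally have "ln \<epsilon> \<le> ln (r^M * \<rho>^(n-2) * r^(M*(n-2)))" using h1 h2 h3 Le by linarith
  then show "\<epsilon> \<le> (1-2*\<rho>)^M * \<rho>^(n-2) * (1-2*\<rho>)^(M*(n-2))"
    using rhs_pos e unfolding r_def[symmetric] by simp
  have ln2: "1/2 \<le> ln (2::real)"
  proof -
    have "ln (1/2::real) \<le> 1/2 - 1" by (intro ln_le_minus_one) simp
    then show ?thesis by (simp add: ln_div)
  qed
  have lg: "log 2 (1/\<epsilon>) = L / ln 2" unfolding L_def log_def by simp
  have "1/24 / (\<rho> * real n) * log 2 (1/\<epsilon>) = L / (24 * ln 2 * \<rho> * real n)" unfolding lg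
    by (simp add: field_simps)
  also have "\<dots> \<le> L / (12 * \<rho> * real n)"
    using ln2 L0 rho npos by (intro divide_left_mono) (auto simp: mult_pos_pos)
  also have "\<dots> = y" unfolding y_def by (simp add: field_simps)
  finally show "1/24 / (\<rho> * real n) * log 2 (1/\<epsilon>) \<le> real M + 1" using My2 by linarith
  show "0 \<le> 1/24 / (\<rho> * real n) * log 2 (1/\<epsilon>)" unfolding lg using L0 rho npos ln2 by simp
qed


theorem mainTheorem8:
  shows "\<exists>c::real. c > 0 \<and>
    (\<forall>n::nat. \<forall>\<rho>::real. \<forall>\<epsilon>::real.
       n \<ge> 2 \<longrightarrow> 0 < \<rho> \<longrightarrow> \<rho> \<le> 1/3 \<longrightarrow> 0 < \<epsilon> \<longrightarrow> \<epsilon> \<le> \<rho> ^ (2*n) \<longrightarrow>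
       (\<exists>g x. averaging_system n \<rho> g x \<and>
          (comm_count n \<epsilon> g x = \<infinity> \<or>
           (c / (\<rho> * real n) * log 2 (1/\<epsilon>)) ^ (n - 1) \<le> real (the_enat (comm_count n \<epsilon> g x)))))"
proof (rule exI[of _ "1/24"], intro conjI allI impI)
  show "(0::real) < 1/24" by simp
  fix n :: nat and \<rho> \<epsilon> :: real
  assume n: "2 \<le> n" and rho: "0 < \<rho>" "\<rho> \<le> 1/3" and e: "0 < \<epsilon>" "\<epsilon> \<le> \<rho>^(2*n)"
  define M where "M = nat \<lfloor>ln (1/\<epsilon>) / (12 * real n * \<rho>)\<rfloor>"
  have K1: "\<epsilon> \<le> 1 * (1-2*\<rho>)^M * \<rho>^(n-2) * (1-2*\<rho>)^(M*(n-2))"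
    using key_ineq(1)[OF n rho e] unfolding M_def by simp
  have K2: "1/24 / (\<rho> * real n) * log 2 (1/\<epsilon>) \<le> real M + 1"
    using key_ineq(2)[OF n rho e] unfolding M_def by simp
  have K3: "0 \<le> 1/24 / (\<rho> * real n) * log 2 (1/\<epsilon>)"
    using key_ineq(3)[OF n rho e] by simp
  define p0 :: "nat \<Rightarrow> real" where "p0 = (\<lambda>i. if i < n-1 then 0 else if i = n-1 then 1 else 0)"
  have Q: "QP n \<rho> \<epsilon> M n" using QP_all[OF n le_refl rho] .
  note H = Q[unfolded QP_def, THEN spec[of _ 0], THEN spec[of _ 1], THEN spec[of _ p0]]
  have pa: "\<forall>i<n-1. p0 i = 0" unfolding p0_def by simp
  have pt: "p0 (n-1) = 0 + 1" unfolding p0_def by simp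
  have "\<exists>q k c. reach n \<rho> \<epsilon> p0 q k \<and> (M+1)^(n-1) \<le> k \<and> 0 \<le> c \<and> c \<le> 0+1 \<and> (\<forall>i<n. q i = c) \<and> (\<forall>i. n \<le> i \<longrightarrow> q i = p0 i)"
    using mp[OF mp[OF mp[OF mp[OF H zero_le_one] K1] pa] pt] .
  then obtain q k where r: "reach n \<rho> \<epsilon> p0 q k" and k: "(M+1)^(n-1) \<le> k" by blast
  have in0: "in01 n p0" unfolding in01_def p0_def by simp
  obtain g x where sys: "averaging_system n \<rho> g x" and cc: "comm_count n \<epsilon> g x = enat k"
    using reach_system[OF r in0 _ e(1)] rho by auto
  have "(1/24 / (\<rho> * real n) * log 2 (1/\<epsilon>)) ^ (n - 1) \<le> (real M + 1) ^ (n-1)"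
    using K2 K3 by (intro power_mono) auto
  also have "\<dots> = real ((M+1)^(n-1))" by (simp add: add.commute)
  also have "\<dots> \<le> real k" using k by (simp only: of_nat_le_iff)
  finally have "(1/24 / (\<rho> * real n) * log 2 (1/\<epsilon>)) ^ (n - 1) \<le> real (the_enat (comm_count n \<epsilon> g x))"
    unfolding cc by simp
  then show "\<exists>g x. averaging_system n \<rho> g x \<and>
          (comm_count n \<epsilon> g x = \<infinity> \<or>
           (1/24 / (\<rho> * real n) * log 2 (1/\<epsilon>)) ^ (n - 1) \<le> real (the_enat (comm_count n \<epsilon> g x)))"
    using sys by blast
qed

end
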